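(* Let $n\ge 2$ and $m\ge 1$, let $(\mathbb{R}^n,g_0)$ be Euclidean space with coordinates $x=(x_1,\dots,x_n)$ and metric components $(g_0)_{ij}=\delta_{ij}$, and let $(F^m,g_F)$ be a Riemannian manifold of dimension $m$. Let $f,h:\mathbb{R}^n\to\mathbb{R}$ be smooth functions with $f>0$, and consider the warped product $M=\mathbb{R}^n\times_f F^m$ with metric $g=g_0\oplus f^2 g_F$. If $(M,g)$ is a gradient Ricci soliton with potential function $h$ (that is, $\mathrm{Ric}_g+\mathrm{Hess}_g(h)=\rho g$ for some constant $\rho\in\mathbb{R}$), then the warping function $f$ is invariant by translation, i.e. there exist constants $a_i,b_i\in\mathbb{R}$ and a function $P$ of class at least $C^1$ such that $$f(x_1,\dots,x_n)=P\Big(\sum_{i=1}^n (a_i x_i+b_i)\Big).$$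
   Context: A warped product $B\times_f F$ is the product manifold $B\times F$ with metric $g_B\oplus f^2 g_F$, where $f:B\to\mathbb{R}$ is positive. Functions on $\mathbb{R}^n$ (such as $f$ and $h$) are identified with their lifts to $M$ via the projection onto the first factor. $\mathrm{Ric}_g$ denotes the Ricci tensor and $\mathrm{Hess}_g(h)$ the Hessian of $h$ with respect to $g$. *)

theory Defs
  imports "HOL-Analysis.Analysis"
begin

definition pd :: "'i::finite \<Rightarrow> (real^'i \<Rightarrow> real) \<Rightarrow> real^'i \<Rightarrow> real" where
  "pd k \<phi> x = deriv (\<lambda>t. \<phi> (x + t *\<^sub>R axis k 1)) 0"

fun Ck_on :: "nat \<Rightarrow> (real^'i::finite) set \<Rightarrow> (real^'i \<Rightarrow> real) \<Rightarrow> bool" where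
  "Ck_on 0 S \<phi> = continuous_on S \<phi>"
| "Ck_on (Suc k) S \<phi> = ((\<forall>x\<in>S. \<phi> differentiable (at x)) \<and> (\<forall>i. Ck_on k S (pd i \<phi>)))"

definition smooth_on :: "(real^'i::finite) set \<Rightarrow> (real^'i \<Rightarrow> real) \<Rightarrow> bool" where
  "smooth_on S \<phi> = (\<forall>k. Ck_on k S \<phi>)"

definition riemannian_metric_on :: "(real^'i::finite) set \<Rightarrow> (real^'i \<Rightarrow> real^'i^'i) \<Rightarrow> bool" where
  "riemannian_metric_on U g \<longleftrightarrow>
     (\<forall>i j. smooth_on U (\<lambda>p. g p $ i $ j)) \<and>
     (\<forall>p\<in>U. \<forall>i j. g p $ i $ j = g p $ j $ i) \<and>
     (\<forall>p\<in>U. \<forall>v. v \<noteq> 0 \<longrightarrow> v \<bullet> (g p *v v) > 0)"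

definition ginv :: "(real^'i::finite \<Rightarrow> real^'i^'i) \<Rightarrow> real^'i \<Rightarrow> real^'i^'i" where
  "ginv g p = matrix_inv (g p)"

definition christoffel :: "(real^'i::finite \<Rightarrow> real^'i^'i) \<Rightarrow> 'i \<Rightarrow> 'i \<Rightarrow> 'i \<Rightarrow> real^'i \<Rightarrow> real" where
  "christoffel g k i j p = (1/2) * (\<Sum>l\<in>UNIV. ginv g p $ k $ l *
      (pd i (\<lambda>q. g q $ j $ l) p + pd j (\<lambda>q. g q $ i $ l) p - pd l (\<lambda>q. g q $ i $ j) p))"

definition ricci :: "(real^'i::finite \<Rightarrow> real^'i^'i) \<Rightarrow> 'i \<Rightarrow> 'i \<Rightarrow> real^'i \<Rightarrow> real" where
  "ricci g i j p = (\<Sum>k\<in>UNIV.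
      pd k (christoffel g k i j) p - pd j (christoffel g k i k) p
      + (\<Sum>l\<in>UNIV. christoffel g k k l p * christoffel g l i j p
                  - christoffel g k j l p * christoffel g l i k p))"

definition hessian :: "(real^'i::finite \<Rightarrow> real^'i^'i) \<Rightarrow> (real^'i \<Rightarrow> real) \<Rightarrow> 'i \<Rightarrow> 'i \<Rightarrow> real^'i \<Rightarrow> real" where
  "hessian g h i j p = pd i (pd j h) p - (\<Sum>k\<in>UNIV. christoffel g k i j p * pd k h p)"

definition gradient_ricci_soliton_on ::
  "(real^'i::finite) set \<Rightarrow> (real^'i \<Rightarrow> real^'i^'i) \<Rightarrow> (real^'i \<Rightarrow> real) \<Rightarrow> real \<Rightarrow> bool" where
  "gradient_ricci_soliton_on S g h \<rho> \<longleftrightarrow>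
     (\<forall>p\<in>S. \<forall>i j. ricci g i j p + hessian g h i j p = \<rho> * g p $ i $ j)"

section \<open>Warped product R^n x_f F^m (F given by a chart U in R^m with metric gF)\<close>

definition base_pt :: "real^('n::finite + 'm::finite) \<Rightarrow> real^'n" where
  "base_pt p = (\<chi> i. p $ Inl i)"

definition fiber_pt :: "real^('n::finite + 'm::finite) \<Rightarrow> real^'m" where
  "fiber_pt p = (\<chi> j. p $ Inr j)"

definition warped_metric ::
  "(real^'n::finite \<Rightarrow> real) \<Rightarrow> (real^'m::finite \<Rightarrow> real^'m^'m) \<Rightarrow> real^('n + 'm) \<Rightarrow> real^('n+'m)^('n+'m)" where
  "warped_metric f gF p = (\<chi> a b. case (a, b) of
       (Inl i, Inl j) \<Rightarrow> (if i = j then 1 else 0)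
     | (Inr k, Inr l) \<Rightarrow> (f (base_pt p))\<^sup>2 * gF (fiber_pt p) $ k $ l
     | _ \<Rightarrow> 0)"

end

theory Submission
  imports Defs
begin


lemma line_has_derivative:
  fixes \<phi> :: "real^'i::finite \<Rightarrow> real"
  assumes "(\<phi> has_derivative D) (at (x + s *\<^sub>R d))"
  shows "((\<lambda>t. \<phi> (x + t *\<^sub>R d)) has_real_derivative D d) (at s)"
proof -
  have l: "linear D" using assms has_derivative_linear by blast
  have "((\<lambda>t. x + t *\<^sub>R d) has_derivative (\<lambda>t. t *\<^sub>R d)) (at s)"
    by (auto intro!: derivative_eq_intros)
  from has_derivative_compose[OF this assms]
  have "((\<lambda>t. \<phi> (x + t *\<^sub>R d)) has_derivative (\<lambda>t. D (t *\<^sub>R d))) (at s)"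
    by (simp add: o_def)
  moreover have "(\<lambda>t. D (t *\<^sub>R d)) = (*) (D d)"
    using l by (auto simp: linear_scale fun_eq_iff)
  ultimately show ?thesis by (simp add: has_field_derivative_def)
qed

lemma pd_eq:
  fixes \<phi> :: "real^'i::finite \<Rightarrow> real"
  assumes "(\<phi> has_derivative D) (at x)"
  shows "pd k \<phi> x = D (axis k 1)"
proof -
  have "((\<lambda>t. \<phi> (x + t *\<^sub>R axis k 1)) has_real_derivative D (axis k 1)) (at 0)"
    using line_has_derivative[of \<phi> D x 0 "axis k 1"] assms by simp
  then show ?thesis unfolding pd_def by (rule DERIV_imp_deriv)
qed

lemma lin_expand:
  fixes D :: "real^'i::finite \<Rightarrow> real"
  assumes "linear D"
  shows "D d = (\<Sum>k\<in>UNIV. d$k * D (axis k 1))"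
proof -
  have "d = (\<Sum>k\<in>UNIV. d$k *\<^sub>R axis k 1)"
    using basis_expansion[of d] by (simp add: scalar_mult_eq_scaleR)
  then have "D d = D (\<Sum>k\<in>UNIV. d$k *\<^sub>R axis k 1)" by simp
  also have "\<dots> = (\<Sum>k\<in>UNIV. d$k * D (axis k 1))"
    using assms by (simp add: linear_sum linear_scale)
  finally show ?thesis .
qed

lemma line_deriv_pd:
  fixes \<phi> :: "real^'i::finite \<Rightarrow> real"
  assumes "\<phi> differentiable (at (x + s *\<^sub>R d))"
  shows "((\<lambda>t. \<phi> (x + t *\<^sub>R d)) has_real_derivative (\<Sum>k\<in>UNIV. d$k * pd k \<phi> (x + s *\<^sub>R d))) (at s)"
proof -
  obtain D where D: "(\<phi> has_derivative D) (at (x + s *\<^sub>R d))"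
    using assms unfolding differentiable_def by blast
  have l: "linear D" using D has_derivative_linear by blast
  have "D d = (\<Sum>k\<in>UNIV. d$k * pd k \<phi> (x + s *\<^sub>R d))"
    using lin_expand[OF l, of d] pd_eq[OF D] by simp
  with line_has_derivative[OF D] show ?thesis by simp
qed

lemma line_deriv_axis:
  fixes \<phi> :: "real^'i::finite \<Rightarrow> real"
  assumes "\<phi> differentiable (at (x + s *\<^sub>R axis k 1))"
  shows "((\<lambda>t. \<phi> (x + t *\<^sub>R axis k 1)) has_real_derivative pd k \<phi> (x + s *\<^sub>R axis k 1)) (at s)"
proof -
  obtain D where D: "(\<phi> has_derivative D) (at (x + s *\<^sub>R axis k 1))"
    using assms unfolding differentiable_def by blast
  from line_has_derivative[OF D] pd_eq[OF D] show ?thesis by simp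
qed

lemma pd_cong_line:
  assumes "\<And>t. \<phi> (x + t *\<^sub>R axis k 1) = \<psi> (x + t *\<^sub>R axis k 1)"
  shows "pd k \<phi> x = pd k \<psi> x"
  unfolding pd_def using assms by simp

lemma pd_const[simp]: "pd k (\<lambda>x. c) x = 0"
  unfolding pd_def by (rule DERIV_imp_deriv) (rule DERIV_const)

lemma pd_add:
  assumes "a differentiable (at x)" "b differentiable (at x)"
  shows "pd k (\<lambda>x. a x + b x) x = pd k a x + pd k b x"
proof -
  obtain Da Db where d: "(a has_derivative Da) (at x)" "(b has_derivative Db) (at x)"
    using assms unfolding differentiable_def by blast
  have s: "((\<lambda>x. a x + b x) has_derivative (\<lambda>h. Da h + Db h)) (at x)"
    using d by (rule has_derivative_add)
  show ?thesis using pd_eq[OF s, of k] pd_eq[OF d(1), of k] pd_eq[OF d(2), of k] by simp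
qed

lemma pd_mult:
  assumes "a differentiable (at x)" "b differentiable (at x)"
  shows "pd k (\<lambda>x. a x * b x) x = a x * pd k b x + pd k a x * b x"
proof -
  obtain Da Db where d: "(a has_derivative Da) (at x)" "(b has_derivative Db) (at x)"
    using assms unfolding differentiable_def by blast
  have s: "((\<lambda>x. a x * b x) has_derivative (\<lambda>h. a x * Db h + Da h * b x)) (at x)"
    using d by (rule has_derivative_mult)
  show ?thesis using pd_eq[OF s, of k] pd_eq[OF d(1), of k] pd_eq[OF d(2), of k] by simp
qed

lemma pd_inverse:
  fixes a :: "real^'i::finite \<Rightarrow> real"
  assumes "a differentiable (at x)" "a x \<noteq> 0"
  shows "pd k (\<lambda>x. inverse (a x)) x = - (pd k a x * inverse (a x) * inverse (a x))"
proof -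
  obtain Da where d: "(a has_derivative Da) (at x)"
    using assms unfolding differentiable_def by blast
  have s: "((\<lambda>x. inverse (a x)) has_derivative (\<lambda>h. - (inverse (a x) * Da h * inverse (a x)))) (at x)"
    using Deriv.has_derivative_inverse[OF assms(2) d] .
  have "pd k (\<lambda>x. inverse (a x)) x = - (inverse (a x) * Da (axis k 1) * inverse (a x))"
    using pd_eq[OF s, of k] .
  also have "\<dots> = - (pd k a x * inverse (a x) * inverse (a x))"
    using pd_eq[OF d, of k] by (simp only: mult.commute mult.left_commute)
  finally show ?thesis .
qed

lemma Ck_mono: "Ck_on (Suc k) UNIV \<phi> \<Longrightarrow> Ck_on k UNIV \<phi>"
proof (induction k arbitrary: \<phi>)
  case 0
  then show ?case
    by (simp add: differentiable_at_imp_differentiable_on differentiable_imp_continuous_on)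
next
  case (Suc k)
  then show ?case by auto
qed

lemma Ck_const: "Ck_on k UNIV (\<lambda>x::real^'i::finite. c)"
proof (induction k arbitrary: c)
  case 0 then show ?case by simp
next
  case (Suc k)
  have e: "pd i (\<lambda>x::real^'i. c) = (\<lambda>x. 0)" for i by (simp add: fun_eq_iff)
  have "Ck_on k UNIV (pd i (\<lambda>x::real^'i. c))" for i unfolding e using Suc.IH by blast
  then show ?case by simp
qed

lemma Ck_add: "Ck_on k UNIV a \<Longrightarrow> Ck_on k UNIV b \<Longrightarrow> Ck_on k UNIV (\<lambda>x. a x + b x)"
proof (induction k arbitrary: a b)
  case 0 then show ?case by (auto intro!: continuous_intros)
next
  case (Suc k)
  have e: "pd i (\<lambda>x. a x + b x) = (\<lambda>x. pd i a x + pd i b x)" for i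
    using Suc.prems by (auto simp: fun_eq_iff intro!: pd_add)
  show ?case using Suc by (auto simp: e)
qed

lemma Ck_mult: "Ck_on k UNIV a \<Longrightarrow> Ck_on k UNIV b \<Longrightarrow> Ck_on k UNIV (\<lambda>x. a x * b x)"
proof (induction k arbitrary: a b)
  case 0 then show ?case by (auto intro!: continuous_intros)
next
  case (Suc k)
  have e: "pd i (\<lambda>x. a x * b x) = (\<lambda>x. a x * pd i b x + pd i a x * b x)" for i
    using Suc.prems by (auto simp: fun_eq_iff intro!: pd_mult)
  have a: "Ck_on k UNIV a" "Ck_on k UNIV b" using Suc.prems Ck_mono by blast+
  show ?case using Suc.prems by (auto simp: e intro!: Ck_add Suc.IH a)
qed

lemma Ck_inverse: "Ck_on k UNIV a \<Longrightarrow> (\<forall>x. a x \<noteq> 0) \<Longrightarrow> Ck_on k UNIV (\<lambda>x. inverse (a x))"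
proof (induction k arbitrary: a)
  case 0 then show ?case by (auto intro!: continuous_intros)
next
  case (Suc k)
  have e: "pd i (\<lambda>x. inverse (a x)) = (\<lambda>x. (-1) * (pd i a x * inverse (a x) * inverse (a x)))" for i
    using Suc.prems by (auto simp: fun_eq_iff intro!: pd_inverse)
  have a: "Ck_on k UNIV a" using Suc.prems Ck_mono by blast
  have ia: "Ck_on k UNIV (\<lambda>x. inverse (a x))" using Suc.IH a Suc.prems by blast
  have d: "(\<lambda>x. inverse (a x)) differentiable (at x)" for x
    using Suc.prems by (auto intro!: derivative_intros)
  have h: "Ck_on k UNIV (\<lambda>x. (-1) * (pd i a x * inverse (a x) * inverse (a x)))" for i
    using Suc.prems by (intro Ck_mult Ck_const ia) auto
  have "Ck_on k UNIV (pd i (\<lambda>x. inverse (a x)))" for i by (simp only: e h)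
  then show ?case using d by simp
qed

lemma smooth_diff: "smooth_on UNIV \<phi> \<Longrightarrow> \<phi> differentiable (at x)"
proof -
  assume "smooth_on UNIV \<phi>"
  then have "Ck_on (Suc 0) UNIV \<phi>" unfolding smooth_on_def by blast
  then show ?thesis by simp
qed

lemma smooth_pd: "smooth_on UNIV \<phi> \<Longrightarrow> smooth_on UNIV (pd i \<phi>)"
proof -
  assume a: "smooth_on UNIV \<phi>"
  have "Ck_on k UNIV (pd i \<phi>)" for k
  proof -
    have "Ck_on (Suc k) UNIV \<phi>" using a unfolding smooth_on_def by blast
    then show ?thesis by simp
  qed
  then show ?thesis unfolding smooth_on_def by blast
qed

lemma smooth_cont: "smooth_on UNIV \<phi> \<Longrightarrow> continuous_on UNIV \<phi>"
proof -
  assume "smooth_on UNIV \<phi>"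
  then have "Ck_on 0 UNIV \<phi>" unfolding smooth_on_def by blast
  then show ?thesis by simp
qed

lemma smooth_add: "smooth_on UNIV a \<Longrightarrow> smooth_on UNIV b \<Longrightarrow> smooth_on UNIV (\<lambda>x. a x + b x)"
  unfolding smooth_on_def using Ck_add by blast
lemma smooth_mult: "smooth_on UNIV a \<Longrightarrow> smooth_on UNIV b \<Longrightarrow> smooth_on UNIV (\<lambda>x. a x * b x)"
  unfolding smooth_on_def using Ck_mult by blast
lemma smooth_const: "smooth_on UNIV (\<lambda>x::real^'i::finite. c)"
  unfolding smooth_on_def using Ck_const by blast
lemma smooth_inverse: "smooth_on UNIV a \<Longrightarrow> (\<forall>x. a x \<noteq> 0) \<Longrightarrow> smooth_on UNIV (\<lambda>x. inverse (a x))"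
  unfolding smooth_on_def using Ck_inverse by blast



lemma mixed_mvt:
  fixes \<phi> :: "real^'i::finite \<Rightarrow> real"
  assumes d1: "\<And>y. \<phi> differentiable (at y)" and d2: "\<And>y. pd i \<phi> differentiable (at y)"
    and s: "s > 0" and t: "t > 0"
  shows "\<exists>\<sigma> \<tau>. 0 < \<sigma> \<and> \<sigma> < s \<and> 0 < \<tau> \<and> \<tau> < t \<and>
     \<phi> (x + s *\<^sub>R axis i 1 + t *\<^sub>R axis j 1) - \<phi> (x + s *\<^sub>R axis i 1) - \<phi> (x + t *\<^sub>R axis j 1) + \<phi> x
      = s * t * pd j (pd i \<phi>) (x + \<sigma> *\<^sub>R axis i 1 + \<tau> *\<^sub>R axis j 1)"
proof -
  define a where "a = (\<lambda>\<sigma>. \<phi> ((x + t *\<^sub>R axis j 1) + \<sigma> *\<^sub>R axis i 1) - \<phi> (x + \<sigma> *\<^sub>R axis i 1))"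
  have "DERIV a \<sigma> :> pd i \<phi> ((x + t *\<^sub>R axis j 1) + \<sigma> *\<^sub>R axis i 1) - pd i \<phi> (x + \<sigma> *\<^sub>R axis i 1)" for \<sigma>
    unfolding a_def by (intro DERIV_diff line_deriv_axis d1)
  from MVT2[OF s this] obtain \<sigma> where \<sigma>: "0 < \<sigma>" "\<sigma> < s"
    "a s - a 0 = (s - 0) * (pd i \<phi> ((x + t *\<^sub>R axis j 1) + \<sigma> *\<^sub>R axis i 1) - pd i \<phi> (x + \<sigma> *\<^sub>R axis i 1))"
    by blast
  define b where "b = (\<lambda>\<tau>. pd i \<phi> ((x + \<sigma> *\<^sub>R axis i 1) + \<tau> *\<^sub>R axis j 1))"
  have "DERIV b \<tau> :> pd j (pd i \<phi>) ((x + \<sigma> *\<^sub>R axis i 1) + \<tau> *\<^sub>R axis j 1)" for \<tau>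
    unfolding b_def by (intro line_deriv_axis d2)
  from MVT2[OF t this] obtain \<tau> where \<tau>: "0 < \<tau>" "\<tau> < t"
    "b t - b 0 = (t - 0) * pd j (pd i \<phi>) ((x + \<sigma> *\<^sub>R axis i 1) + \<tau> *\<^sub>R axis j 1)"
    by blast
  have e1: "x + t *\<^sub>R axis j 1 + \<sigma> *\<^sub>R axis i 1 = x + \<sigma> *\<^sub>R axis i 1 + t *\<^sub>R axis j 1"
    by (simp add: algebra_simps)
  have e2: "x + t *\<^sub>R axis j 1 + s *\<^sub>R axis i 1 = x + s *\<^sub>R axis i 1 + t *\<^sub>R axis j 1"
    by (simp add: algebra_simps)
  have "\<phi> (x + s *\<^sub>R axis i 1 + t *\<^sub>R axis j 1) - \<phi> (x + s *\<^sub>R axis i 1) - \<phi> (x + t *\<^sub>R axis j 1) + \<phi> x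
      = a s - a 0" unfolding a_def by (simp add: e2)
  also have "\<dots> = s * (b t - b 0)" using \<sigma>(3) unfolding b_def e1 by simp
  also have "\<dots> = s * t * pd j (pd i \<phi>) (x + \<sigma> *\<^sub>R axis i 1 + \<tau> *\<^sub>R axis j 1)"
    using \<tau>(3) by simp
  finally show ?thesis using \<sigma> \<tau> by blast
qed

lemma norm_two_axis:
  fixes x :: "real^'i::finite" and i j :: 'i
  assumes "0 < \<sigma>" "\<sigma> < r" "0 < \<tau>" "\<tau> < r"
  shows "dist (x + \<sigma> *\<^sub>R axis i 1 + \<tau> *\<^sub>R axis j 1) x < 2 * r"
proof -
  have "dist (x + \<sigma> *\<^sub>R axis i 1 + \<tau> *\<^sub>R axis j 1) x = norm (\<sigma> *\<^sub>R (axis i 1::real^'i) + \<tau> *\<^sub>R axis j 1)"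
    by (simp add: dist_norm)
  also have "\<dots> \<le> norm (\<sigma> *\<^sub>R (axis i 1 :: real^'i)) + norm (\<tau> *\<^sub>R (axis j 1 :: real^'i))"
    by (rule norm_triangle_ineq)
  also have "\<dots> = \<sigma> + \<tau>" using assms by (simp add: norm_axis_1)
  finally show ?thesis using assms by simp
qed

lemma abs_aux: "(a::real) = b \<Longrightarrow> \<bar>a - c\<bar> < \<bar>c - d\<bar>/2 \<Longrightarrow> \<bar>b - d\<bar> < \<bar>c - d\<bar>/2 \<Longrightarrow> False"
  unfolding abs_real_def by (auto split: if_split_asm)

lemma clairaut:
  fixes \<phi> :: "real^'i::finite \<Rightarrow> real"
  assumes sm: "smooth_on UNIV \<phi>"
  shows "pd i (pd j \<phi>) x = pd j (pd i \<phi>) x"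
proof (rule ccontr)
  assume ne: "pd i (pd j \<phi>) x \<noteq> pd j (pd i \<phi>) x"
  define D1 where "D1 = pd j (pd i \<phi>)"
  define D2 where "D2 = pd i (pd j \<phi>)"
  define e where "e = \<bar>D1 x - D2 x\<bar> / 2"
  have e: "e > 0" using ne unfolding e_def D1_def D2_def by simp
  have c1: "continuous_on UNIV D1" unfolding D1_def by (intro smooth_cont smooth_pd sm)
  have c2: "continuous_on UNIV D2" unfolding D2_def by (intro smooth_cont smooth_pd sm)
  obtain d1 where d1: "d1 > 0" "\<And>y. dist y x < d1 \<Longrightarrow> dist (D1 y) (D1 x) < e"
    using c1 e unfolding continuous_on_iff by blast
  obtain d2 where d2: "d2 > 0" "\<And>y. dist y x < d2 \<Longrightarrow> dist (D2 y) (D2 x) < e"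
    using c2 e unfolding continuous_on_iff by blast
  define r where "r = min d1 d2 / 2"
  have r: "r > 0" using d1 d2 unfolding r_def by simp
  have dd: "\<And>y. \<phi> differentiable (at y)" using sm by (rule smooth_diff)
  have ddi: "\<And>y. pd i \<phi> differentiable (at y)" using sm by (intro smooth_diff smooth_pd)
  have ddj: "\<And>y. pd j \<phi> differentiable (at y)" using sm by (intro smooth_diff smooth_pd)
  obtain \<sigma> \<tau> where st: "0 < \<sigma>" "\<sigma> < r" "0 < \<tau>" "\<tau> < r" and
    eq1: "\<phi> (x + r *\<^sub>R axis i 1 + r *\<^sub>R axis j 1) - \<phi> (x + r *\<^sub>R axis i 1) - \<phi> (x + r *\<^sub>R axis j 1) + \<phi> x
      = r * r * D1 (x + \<sigma> *\<^sub>R axis i 1 + \<tau> *\<^sub>R axis j 1)"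
    using mixed_mvt[OF dd ddi r r, of x j] unfolding D1_def by blast
  obtain \<sigma>' \<tau>' where st': "0 < \<sigma>'" "\<sigma>' < r" "0 < \<tau>'" "\<tau>' < r" and
    eq2: "\<phi> (x + r *\<^sub>R axis j 1 + r *\<^sub>R axis i 1) - \<phi> (x + r *\<^sub>R axis j 1) - \<phi> (x + r *\<^sub>R axis i 1) + \<phi> x
      = r * r * D2 (x + \<sigma>' *\<^sub>R axis j 1 + \<tau>' *\<^sub>R axis i 1)"
    using mixed_mvt[OF dd ddj r r, of x i] unfolding D2_def by blast
  have pt: "x + r *\<^sub>R axis j 1 + r *\<^sub>R axis i 1 = x + r *\<^sub>R axis i 1 + r *\<^sub>R axis j 1"
    by (simp add: algebra_simps)
  have "r * r * D1 (x + \<sigma> *\<^sub>R axis i 1 + \<tau> *\<^sub>R axis j 1) = r * r * D2 (x + \<sigma>' *\<^sub>R axis j 1 + \<tau>' *\<^sub>R axis i 1)"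
    using eq1 eq2[unfolded pt] by linarith
  with r have eq: "D1 (x + \<sigma> *\<^sub>R axis i 1 + \<tau> *\<^sub>R axis j 1) = D2 (x + \<sigma>' *\<^sub>R axis j 1 + \<tau>' *\<^sub>R axis i 1)"
    by simp
  have "2 * r \<le> d1" "2 * r \<le> d2" unfolding r_def by auto
  then have "dist (D1 (x + \<sigma> *\<^sub>R axis i 1 + \<tau> *\<^sub>R axis j 1)) (D1 x) < e"
    "dist (D2 (x + \<sigma>' *\<^sub>R axis j 1 + \<tau>' *\<^sub>R axis i 1)) (D2 x) < e"
    using norm_two_axis[OF st, of x i j] norm_two_axis[OF st', of x j i] d1(2) d2(2) by auto
  with eq show False unfolding e_def dist_real_def by (rule abs_aux)
qed



lemma sum_UNIV_plus:
  "sum g (UNIV::('a::finite + 'b::finite) set) = (\<Sum>i\<in>UNIV. g (Inl i)) + (\<Sum>j\<in>UNIV. g (Inr j))"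
  using sum.Plus[of "UNIV::'a set" "UNIV::'b set" g] by (simp add: o_def)

lemma base_Inl: "base_pt (p + t *\<^sub>R axis (Inl j) 1) = base_pt p + t *\<^sub>R axis j 1"
  by (simp add: base_pt_def vec_eq_iff axis_def)
lemma base_Inr: "base_pt (p + t *\<^sub>R axis (Inr a) 1) = base_pt p"
  by (simp add: base_pt_def vec_eq_iff axis_def)
lemma fiber_Inl: "fiber_pt (p + t *\<^sub>R axis (Inl j) 1) = fiber_pt p"
  by (simp add: fiber_pt_def vec_eq_iff axis_def)

lemma wm_LL[simp]: "warped_metric f gF p $ Inl i $ Inl j = (if i = j then 1 else 0)"
  by (simp add: warped_metric_def)
lemma wm_LR[simp]: "warped_metric f gF p $ Inl i $ Inr a = 0"
  by (simp add: warped_metric_def)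
lemma wm_RL[simp]: "warped_metric f gF p $ Inr a $ Inl i = 0"
  by (simp add: warped_metric_def)
lemma wm_RR[simp]: "warped_metric f gF p $ Inr a $ Inr b = (f (base_pt p))\<^sup>2 * gF (fiber_pt p) $ a $ b"
  by (simp add: warped_metric_def)

lemma pd_wm_L1: "pd c (\<lambda>q. warped_metric f gF q $ Inl r $ y) p = 0"
proof (cases y)
  case (Inl j)
  then show ?thesis by simp
next
  case (Inr b)
  then show ?thesis by simp
qed

lemma pd_wm_L2: "pd c (\<lambda>q. warped_metric f gF q $ y $ Inl r) p = 0"
proof (cases y)
  case (Inl j)
  then show ?thesis by simp
next
  case (Inr b)
  then show ?thesis by simp
qed

lemma pd_wm_RR:
  assumes "f differentiable (at (base_pt p))"
  shows "pd (Inl i) (\<lambda>q. warped_metric f gF q $ Inr a $ Inr b) p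
       = 2 * f (base_pt p) * pd i f (base_pt p) * gF (fiber_pt p) $ a $ b"
proof -
  have "pd (Inl i) (\<lambda>q. warped_metric f gF q $ Inr a $ Inr b) p
      = deriv (\<lambda>t. (f (base_pt p + t *\<^sub>R axis i 1))\<^sup>2 * gF (fiber_pt p) $ a $ b) 0"
    unfolding pd_def by (simp add: base_Inl fiber_Inl)
  also have "\<dots> = 2 * f (base_pt p) * pd i f (base_pt p) * gF (fiber_pt p) $ a $ b"
  proof (rule DERIV_imp_deriv)
    have "((\<lambda>t. f (base_pt p + t *\<^sub>R axis i 1)) has_real_derivative pd i f (base_pt p)) (at 0)"
      using line_deriv_axis[of f "base_pt p" 0 i] assms by simp
    then show "((\<lambda>t. (f (base_pt p + t *\<^sub>R axis i 1))\<^sup>2 * gF (fiber_pt p) $ a $ b) has_real_derivative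
        2 * f (base_pt p) * pd i f (base_pt p) * gF (fiber_pt p) $ a $ b) (at 0)"
      by (auto intro!: derivative_eq_intros)
  qed
  finally show ?thesis .
qed

lemma christoffel_LL: "christoffel (warped_metric f gF) k (Inl i) (Inl j) q = 0"
  unfolding christoffel_def by (simp add: pd_wm_L1 pd_wm_L2)

lemma christoffel_LL_fun: "christoffel (warped_metric f gF) k (Inl i) (Inl j) = (\<lambda>q. 0)"
  by (simp add: fun_eq_iff christoffel_LL)

lemma christoffel_LR_raw:
  "christoffel (warped_metric f gF) k (Inl i) (Inr b) q =
    (1/2) * (\<Sum>l\<in>UNIV. ginv (warped_metric f gF) q $ k $ l * pd (Inl i) (\<lambda>q. warped_metric f gF q $ Inr b $ l) q)"
  unfolding christoffel_def by (simp add: pd_wm_L1 pd_wm_L2)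


lemma ifmult: "(if P then (1::real) else 0) * x = (if P then x else 0)"
  by simp

lemma wm_ker:
  assumes gF: "riemannian_metric_on U gF" and q: "fiber_pt q \<in> U" and fq: "f (base_pt q) \<noteq> 0"
    and v: "warped_metric f gF q *v v = 0"
  shows "v = 0"
proof -
  let ?A = "warped_metric f gF q"
  let ?G = "gF (fiber_pt q)"
  have L: "v $ Inl i = 0" for i
  proof -
    have "(?A *v v) $ Inl i = v $ Inl i"
      by (simp add: matrix_vector_mult_def sum_UNIV_plus ifmult)
    then show ?thesis using v by simp
  qed
  define w where "w = (\<chi> b. v $ Inr b)"
  have Gw: "?G *v w = 0"
  proof -
    have "(?A *v v) $ Inr a = (f (base_pt q))\<^sup>2 * (?G *v w) $ a" for a
      by (simp add: matrix_vector_mult_def sum_UNIV_plus w_def sum_distrib_left mult.assoc)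
    then have "(f (base_pt q))\<^sup>2 * (?G *v w) $ a = 0" for a using v by simp
    then show ?thesis using fq by (simp add: vec_eq_iff)
  qed
  have "w = 0"
  proof (rule ccontr)
    assume "w \<noteq> 0"
    then have "w \<bullet> (?G *v w) > 0" using gF q unfolding riemannian_metric_on_def by blast
    then show False using Gw by simp
  qed
  then have R: "v $ Inr b = 0" for b unfolding w_def by (simp add: vec_eq_iff)
  show ?thesis
  proof (subst vec_eq_iff, intro allI)
    fix c show "v $ c = 0 $ c" using L R by (cases c) auto
  qed
qed

lemma wm_inv:
  assumes gF: "riemannian_metric_on U gF" and q: "fiber_pt q \<in> U" and fq: "f (base_pt q) \<noteq> 0"
  shows "ginv (warped_metric f gF) q ** warped_metric f gF q = mat 1"
proof -
  let ?A = "warped_metric f gF q"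
  have "\<exists>B. B ** ?A = mat 1"
    using wm_ker[of U gF q f] gF q fq by (simp add: matrix_left_invertible_ker)
  then have "invertible ?A" by (simp add: invertible_left_inverse)
  then have "\<exists>A'. ?A ** A' = mat 1 \<and> A' ** ?A = mat 1" unfolding invertible_def .
  from someI_ex[OF this] show ?thesis unfolding ginv_def matrix_inv_def by blast
qed

lemma christoffel_LR:
  assumes gF: "riemannian_metric_on U gF" and q: "fiber_pt q \<in> U" and fq: "f (base_pt q) \<noteq> 0"
    and df: "f differentiable (at (base_pt q))"
  shows "christoffel (warped_metric f gF) k (Inl i) (Inr b) q =
     pd i f (base_pt q) / f (base_pt q) * (if k = Inr b then 1 else 0)"
proof -
  let ?A = "warped_metric f gF q"
  let ?c = "pd i f (base_pt q) / f (base_pt q)"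
  have D: "pd (Inl i) (\<lambda>q. warped_metric f gF q $ Inr b $ l) q = 2 * ?c * ?A $ l $ Inr b" for l
  proof (cases l)
    case (Inl r)
    then show ?thesis using pd_wm_L2 by simp
  next
    case (Inr c)
    have sym: "gF (fiber_pt q) $ b $ c = gF (fiber_pt q) $ c $ b"
      using gF q unfolding riemannian_metric_on_def by blast
    show ?thesis using Inr pd_wm_RR[of f q i gF b c] df fq sym
      by (simp add: power2_eq_square field_simps)
  qed
  have "christoffel (warped_metric f gF) k (Inl i) (Inr b) q =
    (1/2) * (\<Sum>l\<in>UNIV. ginv (warped_metric f gF) q $ k $ l * (2 * ?c * ?A $ l $ Inr b))"
    unfolding christoffel_LR_raw D ..
  also have "\<dots> = ?c * (\<Sum>l\<in>UNIV. ginv (warped_metric f gF) q $ k $ l * ?A $ l $ Inr b)"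
    by (simp add: sum_distrib_left algebra_simps)
  also have "(\<Sum>l\<in>UNIV. ginv (warped_metric f gF) q $ k $ l * ?A $ l $ Inr b)
      = (ginv (warped_metric f gF) q ** ?A) $ k $ Inr b"
    by (simp add: matrix_matrix_mult_def)
  also have "\<dots> = (if k = Inr b then 1 else 0)"
    using wm_inv[of U gF q f] gF q fq by (simp add: mat_def)
  finally show ?thesis .
qed


lemma pd_base_Inl: "pd (Inl j) (\<lambda>q. \<phi> (base_pt q)) p = pd j \<phi> (base_pt p)"
  unfolding pd_def by (simp add: base_Inl)

lemma christoffel_T2:
  assumes gF: "riemannian_metric_on U gF" and p: "fiber_pt p \<in> U" and fpos: "\<And>x. f x \<noteq> 0"
    and df: "\<And>x. f differentiable (at x)"
  shows "pd (Inl j) (christoffel (warped_metric f gF) (Inr a) (Inl i) (Inr a)) p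
     = pd j (\<lambda>x. pd i f x / f x) (base_pt p)"
proof -
  have "pd (Inl j) (christoffel (warped_metric f gF) (Inr a) (Inl i) (Inr a)) p
      = pd (Inl j) (\<lambda>q. pd i f (base_pt q) / f (base_pt q)) p"
  proof (rule pd_cong_line)
    fix t
    have "fiber_pt (p + t *\<^sub>R axis (Inl j) 1) \<in> U" using p by (simp add: fiber_Inl)
    then show "christoffel (warped_metric f gF) (Inr a) (Inl i) (Inr a) (p + t *\<^sub>R axis (Inl j) 1) =
         pd i f (base_pt (p + t *\<^sub>R axis (Inl j) 1)) / f (base_pt (p + t *\<^sub>R axis (Inl j) 1))"
      using christoffel_LR[of U gF "p + t *\<^sub>R axis (Inl j) 1" f] gF fpos df by simp
  qed
  also have "\<dots> = pd j (\<lambda>x. pd i f x / f x) (base_pt p)" by (rule pd_base_Inl)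
  finally show ?thesis .
qed

lemma ricci_LL:
  fixes f :: "real^'n::finite \<Rightarrow> real" and gF :: "real^'m::finite \<Rightarrow> real^'m^'m"
  assumes gF: "riemannian_metric_on U gF" and p: "fiber_pt p \<in> U" and fpos: "\<And>x. f x \<noteq> 0"
    and df: "\<And>x. f differentiable (at x)"
  shows "ricci (warped_metric f gF) (Inl i) (Inl j) p =
     - (real CARD('m) * pd j (\<lambda>x. pd i f x / f x) (base_pt p))
     - real CARD('m) * ((pd j f (base_pt p) / f (base_pt p)) * (pd i f (base_pt p) / f (base_pt p)))"
proof -
  have LR: "\<And>k i b. christoffel (warped_metric f gF) k (Inl i) (Inr b) p =
     pd i f (base_pt p) / f (base_pt p) * (if k = Inr b then 1 else 0)"
    using christoffel_LR[of U gF p f] gF p fpos df by simp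
  have T2: "\<And>a. pd (Inl j) (christoffel (warped_metric f gF) (Inr a) (Inl i) (Inr a)) p
     = pd j (\<lambda>x. pd i f x / f x) (base_pt p)"
    using christoffel_T2[OF gF p fpos df] .
  show ?thesis
    unfolding ricci_def
    by (simp add: sum_UNIV_plus christoffel_LL christoffel_LL_fun LR T2 sum.distrib sum_subtractf
        if_distrib cong: if_cong)
qed


lemma hessian_LL:
  "hessian (warped_metric f gF) (\<lambda>p. h (base_pt p)) (Inl i) (Inl j) p = pd i (pd j h) (base_pt p)"
proof -
  have e: "pd (Inl j) (\<lambda>p. h (base_pt p)) = (\<lambda>q. pd j h (base_pt q))"
    by (simp add: fun_eq_iff pd_base_Inl)
  show ?thesis unfolding hessian_def e by (simp add: christoffel_LL pd_base_Inl)
qed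

lemma base_equation:
  fixes f h :: "real^'n::finite \<Rightarrow> real" and U :: "(real^'m::finite) set"
    and gF :: "real^'m \<Rightarrow> real^'m^'m"
  assumes U: "U \<noteq> {}" and gF: "riemannian_metric_on U gF"
    and fpos: "\<And>x. f x \<noteq> 0" and df: "\<And>x. f differentiable (at x)"
    and soliton: "gradient_ricci_soliton_on {p. fiber_pt p \<in> U}
                    (warped_metric f gF) (\<lambda>p. h (base_pt p)) \<rho>"
  shows "pd i (pd j h) x - real CARD('m) * pd j (\<lambda>x. pd i f x / f x) x
     - real CARD('m) * ((pd j f x / f x) * (pd i f x / f x)) = \<rho> * (if i = j then 1 else 0)"
proof -
  obtain y where y: "y \<in> U" using U by blast
  define p :: "real^('n+'m)" where "p = (\<chi> c. case c of Inl i \<Rightarrow> x $ i | Inr a \<Rightarrow> y $ a)"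
  have bp: "base_pt p = x" by (simp add: p_def base_pt_def vec_eq_iff)
  have fp: "fiber_pt p = y" by (simp add: p_def fiber_pt_def vec_eq_iff)
  have "ricci (warped_metric f gF) (Inl i) (Inl j) p + hessian (warped_metric f gF) (\<lambda>p. h (base_pt p)) (Inl i) (Inl j) p
     = \<rho> * warped_metric f gF p $ Inl i $ Inl j"
    using soliton y fp unfolding gradient_ricci_soliton_on_def by blast
  then show ?thesis
    using ricci_LL[of U gF p f i j] gF y fp fpos df unfolding hessian_LL bp by simp
qed



lemma pd_comb:
  fixes a b c :: "real^'i::finite \<Rightarrow> real"
  assumes "a differentiable (at x)" "b differentiable (at x)" "c differentiable (at x)"
  shows "pd k (\<lambda>x. \<alpha> * a x + \<beta> + \<gamma> * (b x * c x)) x = \<alpha> * pd k a x + \<gamma> * (b x * pd k c x + pd k b x * c x)"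
proof -
  obtain Da Db Dc where d: "(a has_derivative Da) (at x)" "(b has_derivative Db) (at x)" "(c has_derivative Dc) (at x)"
    using assms unfolding differentiable_def by blast
  have s: "((\<lambda>x. \<alpha> * a x + \<beta> + \<gamma> * (b x * c x)) has_derivative (\<lambda>h. \<alpha> * Da h + 0 + \<gamma> * (b x * Dc h + Db h * c x))) (at x)"
    using d by (auto intro!: derivative_eq_intros)
  show ?thesis using pd_eq[OF s, of k] pd_eq[OF d(1), of k] pd_eq[OF d(2), of k] pd_eq[OF d(3), of k] by simp
qed

lemma rank_relation:
  fixes f h :: "real^'n::finite \<Rightarrow> real" and m :: real
  assumes fs: "smooth_on UNIV f" and fpos: "\<And>x. f x > 0" and hs: "smooth_on UNIV h" and m: "m > 0"
    and eq: "\<And>x i j. pd i (pd j h) x - m * pd j (\<lambda>x. pd i f x / f x) x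
        - m * ((pd j f x / f x) * (pd i f x / f x)) = \<rho> * (if i = j then 1 else 0)"
  defines "v \<equiv> \<lambda>i x. pd i f x / f x"
  shows "smooth_on UNIV (v i)"
    and "pd j (v i) x = pd i (v j) x"
    and "pd k (v i) x * v j x = pd j (v i) x * v k x"
proof -
  have sv: "smooth_on UNIV (v i)" for i
  proof -
    have "v i = (\<lambda>x. pd i f x * inverse (f x))" unfolding v_def by (simp add: divide_inverse)
    moreover have "smooth_on UNIV (\<lambda>x. pd i f x * inverse (f x))"
      using fpos by (intro smooth_mult smooth_pd fs smooth_inverse) (auto simp: less_imp_neq[symmetric])
    ultimately show ?thesis by simp
  qed
  then show "smooth_on UNIV (v i)" .
  have hsym: "pd i (pd j h) = pd j (pd i h)" for i j by (simp add: fun_eq_iff clairaut hs)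
  have eq': "pd j (v i) x = (1/m) * pd i (pd j h) x + (- (\<rho> * (if i = j then 1 else 0) / m)) + (-1) * (v j x * v i x)"
    for i j x
    using eq[of i j x] m unfolding v_def by (simp add: field_simps)
  have sym: "pd j (v i) x = pd i (v j) x" for i j x
    using eq'[of i j x] eq'[of j i x] hsym[of i j] by (simp add: mult.commute)
  then show "pd j (v i) x = pd i (v j) x" .
  have d3: "pd k (pd i (pd j h)) x = pd j (pd i (pd k h)) x" for i j k
  proof -
    have "pd k (pd i (pd j h)) x = pd k (pd j (pd i h)) x" by (simp add: hsym)
    also have "\<dots> = pd j (pd k (pd i h)) x" by (intro clairaut smooth_pd hs)
    also have "\<dots> = pd j (pd i (pd k h)) x" by (simp add: hsym)
    finally show ?thesis .
  qed
  have dv: "v i differentiable (at x)" for i x using sv by (rule smooth_diff)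
  have dh: "pd i (pd j h) differentiable (at x)" for i j x by (intro smooth_diff smooth_pd hs)
  have third: "pd k (pd j (v i)) x = (1/m) * pd k (pd i (pd j h)) x + (-1) * (v j x * pd k (v i) x + pd k (v j) x * v i x)"
    for i j k
  proof -
    have e: "pd j (v i) = (\<lambda>x. (1/m) * pd i (pd j h) x + (- (\<rho> * (if i = j then 1 else 0) / m)) + (-1) * (v j x * v i x))"
      using eq' by (simp add: fun_eq_iff)
    show ?thesis unfolding e by (rule pd_comb[OF dh dv dv])
  qed
  have "pd k (pd j (v i)) x = pd j (pd k (v i)) x" by (intro clairaut sv)
  then have "(1/m) * pd k (pd i (pd j h)) x + (-1) * (v j x * pd k (v i) x + pd k (v j) x * v i x)
     = (1/m) * pd j (pd i (pd k h)) x + (-1) * (v k x * pd j (v i) x + pd j (v k) x * v i x)"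
    using third[of k j i] third[of j k i] by simp
  then show "pd k (v i) x * v j x = pd j (v i) x * v k x"
    using d3[of k i j] sym[of k j x] by (simp add: algebra_simps)
qed



lemma key_identity:
  fixes G V0 w :: "real^'n::finite" and A :: "real^'n^'n"
  assumes R: "\<And>i j k. A$i$k * G$j = A$i$j * G$k"
  shows "(G \<bullet> V0) *\<^sub>R (A *v w) = (G \<bullet> w) *\<^sub>R (A *v V0)"
proof (subst vec_eq_iff, intro allI)
  fix i
  have "(G \<bullet> V0) * (\<Sum>k\<in>UNIV. A$i$k * w$k) = (\<Sum>j\<in>UNIV. \<Sum>k\<in>UNIV. (G$j * V0$j) * (A$i$k * w$k))"
    unfolding inner_vec_def inner_real_def by (rule sum_product)
  also have "\<dots> = (\<Sum>j\<in>UNIV. \<Sum>k\<in>UNIV. (A$i$k * G$j) * (w$k * V0$j))"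
    by (simp only: mult_ac)
  also have "\<dots> = (\<Sum>j\<in>UNIV. \<Sum>k\<in>UNIV. (A$i$j * G$k) * (w$k * V0$j))"
    by (simp only: R)
  also have "\<dots> = (\<Sum>k\<in>UNIV. \<Sum>j\<in>UNIV. (A$i$j * G$k) * (w$k * V0$j))"
    by (rule sum.swap)
  also have "\<dots> = (\<Sum>k\<in>UNIV. \<Sum>j\<in>UNIV. (G$k * w$k) * (A$i$j * V0$j))"
    by (simp only: mult_ac)
  also have "\<dots> = (G \<bullet> w) * (\<Sum>j\<in>UNIV. A$i$j * V0$j)"
    unfolding inner_vec_def inner_real_def by (rule sum_product[symmetric])
  finally show "((G \<bullet> V0) *\<^sub>R (A *v w)) $ i = ((G \<bullet> w) *\<^sub>R (A *v V0)) $ i"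
    by (simp add: matrix_vector_mult_def)
qed

lemma alg_bound:
  fixes G V0 w :: "real^'n::finite" and A :: "real^'n^'n"
  assumes R: "\<And>i j k. A$i$k * G$j = A$i$j * G$k" and orth: "V0 \<bullet> w = 0" and pos: "G \<bullet> V0 > 0"
  shows "\<bar>2 * ((G - V0) \<bullet> (A *v w))\<bar> * (G \<bullet> V0) \<le> 2 * norm (A *v V0) * norm w * ((G - V0) \<bullet> (G - V0))"
proof -
  have "2 * ((G - V0) \<bullet> (A *v w)) * (G \<bullet> V0) = 2 * ((G - V0) \<bullet> ((G \<bullet> V0) *\<^sub>R (A *v w)))"
    by simp
  also have "\<dots> = 2 * (G \<bullet> w) * ((G - V0) \<bullet> (A *v V0))"
    by (subst key_identity[OF R]) simp
  also have "G \<bullet> w = (G - V0) \<bullet> w" using orth by (simp add: inner_diff_left)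
  finally have e: "2 * ((G - V0) \<bullet> (A *v w)) * (G \<bullet> V0) = 2 * ((G - V0) \<bullet> w) * ((G - V0) \<bullet> (A *v V0))" .
  have "\<bar>2 * ((G - V0) \<bullet> (A *v w))\<bar> * (G \<bullet> V0) = \<bar>2 * ((G - V0) \<bullet> (A *v w)) * (G \<bullet> V0)\<bar>"
    using pos by (simp add: abs_mult)
  also have "\<dots> = 2 * (\<bar>(G - V0) \<bullet> w\<bar> * \<bar>(G - V0) \<bullet> (A *v V0)\<bar>)" unfolding e by (simp add: abs_mult)
  also have "\<dots> \<le> 2 * ((norm (G - V0) * norm w) * (norm (G - V0) * norm (A *v V0)))"
    by (intro mult_left_mono mult_mono Cauchy_Schwarz_ineq2) auto
  also have "\<dots> = 2 * norm (A *v V0) * norm w * ((G - V0) \<bullet> (G - V0))"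
    by (simp add: power2_norm_eq_inner[symmetric] power2_eq_square)
  finally show ?thesis .
qed

lemma psi_deriv:
  fixes v :: "'n::finite \<Rightarrow> real^'n \<Rightarrow> real"
  assumes sv: "\<And>i. smooth_on UNIV (v i)"
  defines "V \<equiv> \<lambda>x. (\<chi> i. v i x)" and "A \<equiv> \<lambda>x. (\<chi> i k. pd k (v i) x)"
  shows "((\<lambda>s. (V (x + s *\<^sub>R w) - V0) \<bullet> (V (x + s *\<^sub>R w) - V0)) has_real_derivative
     2 * ((V (x + s *\<^sub>R w) - V0) \<bullet> (A (x + s *\<^sub>R w) *v w))) (at s)"
proof -
  let ?z = "x + s *\<^sub>R w"
  have li: "((\<lambda>s. v i (x + s *\<^sub>R w)) has_real_derivative (\<Sum>k\<in>UNIV. w$k * pd k (v i) ?z)) (at s)" for i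
    using sv by (intro line_deriv_pd smooth_diff)
  have t: "((\<lambda>s. (v i (x + s *\<^sub>R w) - V0$i) * (v i (x + s *\<^sub>R w) - V0$i)) has_real_derivative
      (\<Sum>k\<in>UNIV. w$k * pd k (v i) ?z) * (v i ?z - V0$i) + (v i ?z - V0$i) * (\<Sum>k\<in>UNIV. w$k * pd k (v i) ?z)) (at s)" for i
  proof (rule DERIV_cong)
    show "((\<lambda>s. (v i (x + s *\<^sub>R w) - V0$i) * (v i (x + s *\<^sub>R w) - V0$i)) has_real_derivative
      (v i ?z - V0$i) * ((\<Sum>k\<in>UNIV. w$k * pd k (v i) ?z) - 0) + ((\<Sum>k\<in>UNIV. w$k * pd k (v i) ?z) - 0) * (v i ?z - V0$i)) (at s)"
      by (intro DERIV_mult' DERIV_diff li DERIV_const)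
  qed simp
  have "((\<lambda>s. \<Sum>i\<in>UNIV. (v i (x + s *\<^sub>R w) - V0$i) * (v i (x + s *\<^sub>R w) - V0$i)) has_real_derivative
      (\<Sum>i\<in>UNIV. (\<Sum>k\<in>UNIV. w$k * pd k (v i) ?z) * (v i ?z - V0$i) + (v i ?z - V0$i) * (\<Sum>k\<in>UNIV. w$k * pd k (v i) ?z))) (at s)"
    by (rule DERIV_sum) (rule t)
  moreover have "(\<lambda>s. (V (x + s *\<^sub>R w) - V0) \<bullet> (V (x + s *\<^sub>R w) - V0))
     = (\<lambda>s. \<Sum>i\<in>UNIV. (v i (x + s *\<^sub>R w) - V0$i) * (v i (x + s *\<^sub>R w) - V0$i))"
    by (simp add: fun_eq_iff inner_vec_def V_def)
  moreover have "(\<Sum>i\<in>UNIV. (\<Sum>k\<in>UNIV. w$k * pd k (v i) ?z) * (v i ?z - V0$i) + (v i ?z - V0$i) * (\<Sum>k\<in>UNIV. w$k * pd k (v i) ?z))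
     = 2 * ((V ?z - V0) \<bullet> (A ?z *v w))"
    by (simp add: inner_vec_def V_def A_def matrix_vector_mult_def sum_distrib_left algebra_simps)
  ultimately show ?thesis by simp
qed


lemma local_const:
  fixes v :: "'n::finite \<Rightarrow> real^'n \<Rightarrow> real"
  assumes sv: "\<And>i. smooth_on UNIV (v i)"
    and R: "\<And>x i j k. pd k (v i) x * v j x = pd j (v i) x * v k x"
  defines "V \<equiv> \<lambda>x. (\<chi> i. v i x)" and "A \<equiv> \<lambda>x. (\<chi> i k. pd k (v i) x)"
  assumes nz: "V x \<noteq> 0" and orth: "V x \<bullet> w = 0"
  shows "\<exists>\<delta>>0. \<forall>s. 0 \<le> s \<and> s < \<delta> \<longrightarrow> V (x + s *\<^sub>R w) = V x"
proof -
  define V0 where "V0 = V x"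
  define c0 where "c0 = V0 \<bullet> V0"
  have c0: "c0 > 0" using nz unfolding c0_def V0_def by simp
  have contV: "continuous_on UNIV V"
    unfolding V_def by (intro continuous_on_vec_lambda smooth_cont sv)
  have AV: "(\<lambda>z. A z *v V0) = (\<lambda>z. \<chi> i. \<Sum>k\<in>UNIV. pd k (v i) z * V0$k)"
    by (simp add: fun_eq_iff A_def matrix_vector_mult_def)
  have contA: "continuous_on UNIV (\<lambda>z. A z *v V0)"
    unfolding AV by (intro continuous_on_vec_lambda continuous_on_sum continuous_on_mult_right smooth_cont smooth_pd sv)
  define F1 where "F1 = (\<lambda>z. V z \<bullet> V0)"
  define F2 where "F2 = (\<lambda>z. norm (A z *v V0))"
  have cF1: "continuous_on UNIV F1" unfolding F1_def by (intro continuous_on_inner contV continuous_on_const)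
  have cF2: "continuous_on UNIV F2" unfolding F2_def by (intro continuous_on_norm contA)
  have "c0 / 2 > 0" using c0 by simp
  then obtain d1 where d1: "d1 > 0" "\<And>z. dist z x < d1 \<Longrightarrow> dist (F1 z) (F1 x) < c0 / 2"
    using cF1 unfolding continuous_on_iff by blast
  have "(1::real) > 0" by simp
  then obtain d2 where d2: "d2 > 0" "\<And>z. dist z x < d2 \<Longrightarrow> dist (F2 z) (F2 x) < 1"
    using cF2 unfolding continuous_on_iff by blast
  define d where "d = min d1 d2"
  define \<delta> where "\<delta> = d / (norm w + 1)"
  have "norm w + 1 > 0" by (simp add: add_nonneg_pos)
  moreover have "d > 0" unfolding d_def using d1(1) d2(1) by simp
  ultimately have \<delta>: "\<delta> > 0" unfolding \<delta>_def by simp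
  define K where "K = F2 x + 1"
  have K: "K > 0" unfolding K_def F2_def by (simp add: add_nonneg_pos)
  define C where "C = 4 * K * norm w / c0"
  define \<psi> where "\<psi> = (\<lambda>s. (V (x + s *\<^sub>R w) - V0) \<bullet> (V (x + s *\<^sub>R w) - V0))"
  define \<psi>' where "\<psi>' = (\<lambda>s. 2 * ((V (x + s *\<^sub>R w) - V0) \<bullet> (A (x + s *\<^sub>R w) *v w)))"
  have der: "(\<psi> has_real_derivative \<psi>' s) (at s)" for s
    unfolding \<psi>_def \<psi>'_def V_def A_def by (rule psi_deriv[OF sv])
  have psi_nn: "\<psi> s \<ge> 0" for s unfolding \<psi>_def by simp
  have near: "dist (x + s *\<^sub>R w) x < d" if "0 \<le> s" "s < \<delta>" for s
  proof -
    have "dist (x + s *\<^sub>R w) x = s * norm w" using that by (simp add: dist_norm)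
    also have "\<dots> \<le> \<delta> * norm w" using that by (simp add: mult_right_mono)
    also have "\<dots> < d"
    proof -
      have "d > 0" unfolding d_def using d1 d2 by simp
      then have "d * norm w < d * (norm w + 1)" by simp
      then show ?thesis unfolding \<delta>_def by (simp add: field_simps add_pos_nonneg)
    qed
    finally show ?thesis .
  qed
  have bound: "\<psi>' s \<le> C * \<psi> s" if "0 \<le> s" "s < \<delta>" for s
  proof -
    define z where "z = x + s *\<^sub>R w"
    have dz1: "dist z x < d1" and dz2: "dist z x < d2" using near[OF that] unfolding z_def d_def by auto
    have h1: "dist (F1 z) (F1 x) < c0 / 2" by (rule d1(2)[OF dz1])
    have "F1 x = c0" unfolding F1_def c0_def V0_def ..
    then have F1z: "F1 z > c0 / 2" using h1 unfolding dist_real_def abs_real_def by (auto split: if_split_asm)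
    have h2: "dist (F2 z) (F2 x) < 1" by (rule d2(2)[OF dz2])
    then have F2z: "F2 z \<le> K" unfolding dist_real_def abs_real_def K_def by (auto split: if_split_asm)
    have Rz: "\<And>i j k. A z $ i $ k * V z $ j = A z $ i $ j * V z $ k"
      unfolding A_def V_def using R by simp
    have orth0: "V0 \<bullet> w = 0" using orth unfolding V0_def .
    have pos: "V z \<bullet> V0 > 0" using F1z c0 unfolding F1_def by simp
    have ab: "\<bar>\<psi>' s\<bar> * F1 z \<le> 2 * F2 z * norm w * \<psi> s"
      using alg_bound[OF Rz orth0 pos] unfolding \<psi>'_def \<psi>_def F1_def F2_def z_def .
    have "2 * F2 z * norm w * \<psi> s \<le> 2 * K * norm w * \<psi> s"
      using F2z psi_nn[of s] by (intro mult_right_mono) auto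
    moreover have "\<bar>\<psi>' s\<bar> * (c0 / 2) \<le> \<bar>\<psi>' s\<bar> * F1 z"
      using F1z by (intro mult_left_mono) auto
    ultimately have "\<bar>\<psi>' s\<bar> * (c0 / 2) \<le> 2 * K * norm w * \<psi> s" using ab by linarith
    then have "\<bar>\<psi>' s\<bar> \<le> C * \<psi> s" unfolding C_def using c0 by (simp add: field_simps)
    then show ?thesis by simp
  qed
  show ?thesis
  proof (intro exI[of _ \<delta>] conjI allI impI \<delta>)
    fix s assume s: "0 \<le> s \<and> s < \<delta>"
    define \<phi> where "\<phi> = (\<lambda>s. exp (- C * s) * \<psi> s)"
    have "\<phi> s \<le> \<phi> 0"
    proof (rule DERIV_nonpos_imp_nonincreasing[of 0 s \<phi>])
      show "0 \<le> s" using s by simp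
      fix t assume t: "0 \<le> t" "t \<le> s"
      have dd: "(\<phi> has_real_derivative (exp (- C * t) * \<psi>' t + (exp (- C * t) * (- C)) * \<psi> t)) (at t)"
        unfolding \<phi>_def by (auto intro!: derivative_eq_intros der simp: algebra_simps)
      have "\<psi>' t \<le> C * \<psi> t" using bound[of t] t s by simp
      then have "exp (- C * t) * \<psi>' t + (exp (- C * t) * (- C)) * \<psi> t \<le> 0"
        by (simp add: algebra_simps mult_left_mono)
      then show "\<exists>y. (\<phi> has_real_derivative y) (at t) \<and> y \<le> 0" using dd by blast
    qed
    moreover have "\<psi> 0 = 0" unfolding \<psi>_def V0_def by simp
    ultimately have "exp (- C * s) * \<psi> s \<le> 0" unfolding \<phi>_def by simp
    then have "\<psi> s \<le> 0" by (simp add: mult_le_0_iff)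
    then have "\<psi> s = 0" using psi_nn[of s] by linarith
    then show "V (x + s *\<^sub>R w) = V x" unfolding \<psi>_def V0_def by simp
  qed
qed


lemma global_const:
  fixes v :: "'n::finite \<Rightarrow> real^'n \<Rightarrow> real"
  assumes sv: "\<And>i. smooth_on UNIV (v i)"
    and R: "\<And>x i j k. pd k (v i) x * v j x = pd j (v i) x * v k x"
    and nz: "(\<chi> i. v i x) \<noteq> 0" and orth: "(\<chi> i. v i x) \<bullet> w = 0"
  shows "(\<chi> i. v i (x + s *\<^sub>R w)) = (\<chi> i. v i x)"
proof -
  define V where "V = (\<lambda>x. (\<chi> i. v i x))"
  have loc: "\<And>x w. V x \<noteq> 0 \<Longrightarrow> V x \<bullet> w = 0 \<Longrightarrow> \<exists>\<delta>>0. \<forall>s. 0 \<le> s \<and> s < \<delta> \<longrightarrow> V (x + s *\<^sub>R w) = V x"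
    unfolding V_def by (rule local_const[OF sv R]) auto
  have contV: "continuous_on UNIV V"
    unfolding V_def by (intro continuous_on_vec_lambda smooth_cont sv)
  define Z where "Z = {s. V (x + s *\<^sub>R w) = V x}"
  have "closed Z" unfolding Z_def
    by (intro closed_Collect_eq continuous_on_compose2[OF contV] continuous_intros) auto
  moreover have "open Z"
    unfolding open_contains_ball
  proof
    fix s assume "s \<in> Z"
    then have Vs: "V (x + s *\<^sub>R w) = V x" unfolding Z_def by simp
    let ?x' = "x + s *\<^sub>R w"
    have nz': "V ?x' \<noteq> 0" using Vs nz unfolding V_def by simp
    have o1: "V ?x' \<bullet> w = 0" using Vs orth unfolding V_def by simp
    have o2: "V ?x' \<bullet> (- w) = 0" using o1 by simp
    obtain \<delta>1 where \<delta>1: "\<delta>1 > 0" "\<forall>r. 0 \<le> r \<and> r < \<delta>1 \<longrightarrow> V (?x' + r *\<^sub>R w) = V ?x'"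
      using loc[OF nz' o1] by blast
    obtain \<delta>2 where \<delta>2: "\<delta>2 > 0" "\<forall>r. 0 \<le> r \<and> r < \<delta>2 \<longrightarrow> V (?x' + r *\<^sub>R (- w)) = V ?x'"
      using loc[OF nz' o2] by blast
    show "\<exists>e>0. ball s e \<subseteq> Z"
    proof (intro exI[of _ "min \<delta>1 \<delta>2"] conjI subsetI)
      show "min \<delta>1 \<delta>2 > 0" using \<delta>1 \<delta>2 by simp
      fix r assume "r \<in> ball s (min \<delta>1 \<delta>2)"
      then have r: "\<bar>r - s\<bar> < min \<delta>1 \<delta>2" by (simp add: dist_real_def abs_minus_commute)
      show "r \<in> Z"
      proof (cases "s \<le> r")
        case True
        have e1: "?x' + (r - s) *\<^sub>R w = x + r *\<^sub>R w" by (simp add: algebra_simps)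
        have e2: "V (?x' + (r - s) *\<^sub>R w) = V ?x'" using \<delta>1(2) r True by auto
        from e2 have "V (x + r *\<^sub>R w) = V x" unfolding e1 Vs .
        then show ?thesis unfolding Z_def by simp
      next
        case False
        have e1: "?x' + (s - r) *\<^sub>R (- w) = x + r *\<^sub>R w" by (simp add: algebra_simps)
        have e2: "V (?x' + (s - r) *\<^sub>R (- w)) = V ?x'" using \<delta>2(2) r False by auto
        from e2 have "V (x + r *\<^sub>R w) = V x" unfolding e1 Vs .
        then show ?thesis unfolding Z_def by simp
      qed
    qed
  qed
  moreover have "0 \<in> Z" unfolding Z_def by simp
  ultimately have "Z = UNIV" using clopen[of Z] by blast
  then show ?thesis unfolding Z_def V_def by auto
qed

lemma cs_eq:
  fixes a b :: "real^'n::finite"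
  assumes b: "b \<noteq> 0" and eq: "(a \<bullet> b)\<^sup>2 = (a \<bullet> a) * (b \<bullet> b)"
  shows "a = ((a \<bullet> b) / (b \<bullet> b)) *\<^sub>R b"
proof -
  define c where "c = (a \<bullet> b) / (b \<bullet> b)"
  have bb: "b \<bullet> b > 0" using b by simp
  have "(a - c *\<^sub>R b) \<bullet> (a - c *\<^sub>R b) = a \<bullet> a - 2 * c * (a \<bullet> b) + c * c * (b \<bullet> b)"
    by (simp add: inner_diff_left inner_diff_right inner_commute algebra_simps)
  also have "\<dots> = ((a \<bullet> a) * (b \<bullet> b) - (a \<bullet> b)\<^sup>2) / (b \<bullet> b)"
    unfolding c_def using bb by (simp add: field_simps power2_eq_square)
  also have "\<dots> = 0" using eq by simp
  finally have "a - c *\<^sub>R b = 0" by simp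
  then show ?thesis unfolding c_def by simp
qed

lemma parallel:
  fixes v :: "'n::finite \<Rightarrow> real^'n \<Rightarrow> real"
  assumes sv: "\<And>i. smooth_on UNIV (v i)"
    and R: "\<And>x i j k. pd k (v i) x * v j x = pd j (v i) x * v k x"
  defines "V \<equiv> \<lambda>x. (\<chi> i. v i x)"
  assumes nx: "V x \<noteq> 0" and ny: "V y \<noteq> 0"
  shows "(V x \<bullet> V y)\<^sup>2 = (V x \<bullet> V x) * (V y \<bullet> V y)"
proof (rule ccontr)
  assume ne: "(V x \<bullet> V y)\<^sup>2 \<noteq> (V x \<bullet> V x) * (V y \<bullet> V y)"
  have gc: "\<And>x w s. V x \<noteq> 0 \<Longrightarrow> V x \<bullet> w = 0 \<Longrightarrow> V (x + s *\<^sub>R w) = V x"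
    unfolding V_def by (rule global_const[OF sv R]) auto
  define a where "a = V x"
  define b where "b = V y"
  have aa: "a \<bullet> a > 0" using nx unfolding a_def by simp
  define u where "u = b - ((a \<bullet> b) / (a \<bullet> a)) *\<^sub>R a"
  have au: "a \<bullet> u = 0" unfolding u_def using aa by (simp add: inner_diff_right)
  have ub0: "u \<bullet> b = b \<bullet> b - (a \<bullet> b) / (a \<bullet> a) * (a \<bullet> b)"
    unfolding u_def by (simp add: inner_diff_left)
  have "(u \<bullet> b) * (a \<bullet> a) = (b \<bullet> b) * (a \<bullet> a) - (a \<bullet> b)\<^sup>2"
    unfolding ub0 using aa by (simp add: field_simps power2_eq_square)
  then have ub: "u \<bullet> b \<noteq> 0" using ne aa unfolding a_def b_def by (auto simp: mult.commute)
  define t where "t = ((y - x) \<bullet> b) / (u \<bullet> b)"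
  define z where "z = x + t *\<^sub>R u"
  have "V z = V x" unfolding z_def using gc[of x u t] nx au unfolding a_def by simp
  moreover have "V z = V y"
  proof -
    have "b \<bullet> (z - y) = 0"
      unfolding z_def t_def using ub by (simp add: inner_diff_right inner_add_right inner_commute field_simps)
    then have "V (y + 1 *\<^sub>R (z - y)) = V y" using gc[of y "z - y" 1] ny unfolding b_def by simp
    then show ?thesis by simp
  qed
  ultimately have "a = b" unfolding a_def b_def by simp
  then show False using ne unfolding a_def b_def by (simp add: power2_eq_square)
qed



lemma nu_exists:
  fixes v :: "'n::finite \<Rightarrow> real^'n \<Rightarrow> real"
  assumes sv: "\<And>i. smooth_on UNIV (v i)"
    and R: "\<And>x i j k. pd k (v i) x * v j x = pd j (v i) x * v k x"
  shows "\<exists>\<nu>. \<forall>x w. \<nu> \<bullet> w = 0 \<longrightarrow> (\<chi> i. v i x) \<bullet> w = 0"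
proof (cases "\<forall>x. (\<chi> i. v i x) = (0::real^'n)")
  case True
  then show ?thesis by (intro exI[of _ 0]) simp
next
  case False
  then obtain x0 where x0: "(\<chi> i. v i x0) \<noteq> (0::real^'n)" by blast
  define \<nu> where "\<nu> = (\<chi> i. v i x0)"
  show ?thesis
  proof (intro exI[of _ \<nu>] allI impI)
    fix x w assume w: "\<nu> \<bullet> w = 0"
    show "(\<chi> i. v i x) \<bullet> w = 0"
    proof (cases "(\<chi> i. v i x) = (0::real^'n)")
      case True then show ?thesis by simp
    next
      case False
      have "((\<chi> i. v i x) \<bullet> \<nu>)\<^sup>2 = ((\<chi> i. v i x) \<bullet> (\<chi> i. v i x)) * (\<nu> \<bullet> \<nu>)"
        unfolding \<nu>_def by (rule parallel[OF sv R]) (use False x0 in auto)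
      then have "(\<chi> i. v i x) = (((\<chi> i. v i x) \<bullet> \<nu>) / (\<nu> \<bullet> \<nu>)) *\<^sub>R \<nu>"
        using x0 unfolding \<nu>_def by (intro cs_eq) auto
      then have "(\<chi> i. v i x) \<bullet> w = (((\<chi> i. v i x) \<bullet> \<nu>) / (\<nu> \<bullet> \<nu>)) * (\<nu> \<bullet> w)"
        by (metis inner_scaleR_left)
      then show ?thesis using w by simp
    qed
  qed
qed

lemma f_form:
  fixes f :: "real^'n::finite \<Rightarrow> real" and v :: "'n \<Rightarrow> real^'n \<Rightarrow> real"
  assumes fs: "smooth_on UNIV f" and fpos: "\<And>x. f x > 0"
    and sv: "\<And>i. smooth_on UNIV (v i)"
    and R: "\<And>x i j k. pd k (v i) x * v j x = pd j (v i) x * v k x"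
    and vdef: "\<And>i x. v i x = pd i f x / f x"
  shows "\<exists>a b :: real^'n. \<exists>P :: real \<Rightarrow> real.
           P C1_differentiable_on UNIV \<and>
           (\<forall>x. f x = P (\<Sum>i\<in>UNIV. a $ i * x $ i + b $ i))"
proof -
  obtain \<nu> :: "real^'n" where nu: "\<And>x w. \<nu> \<bullet> w = 0 \<Longrightarrow> (\<chi> i. v i x) \<bullet> w = 0"
    using nu_exists[OF sv R] by blast
  define c where "c = \<nu> \<bullet> \<nu>"
  define d where "d = (1 / c) *\<^sub>R \<nu>"
  define P where "P = (\<lambda>t. f (0 + t *\<^sub>R d))"
  have df: "\<And>x. f differentiable (at x)" using fs by (rule smooth_diff)
  have "P C1_differentiable_on UNIV"
    unfolding C1_differentiable_on_def
  proof (intro exI[of _ "\<lambda>t. \<Sum>k\<in>UNIV. d$k * pd k f (0 + t *\<^sub>R d)"] conjI ballI)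
    fix t :: real
    show "(P has_vector_derivative (\<Sum>k\<in>UNIV. d$k * pd k f (0 + t *\<^sub>R d))) (at t)"
      unfolding P_def has_real_derivative_iff_has_vector_derivative[symmetric]
      by (rule line_deriv_pd[OF df])
  next
    show "continuous_on UNIV (\<lambda>t. \<Sum>k\<in>UNIV. d$k * pd k f (0 + t *\<^sub>R d))"
      by (intro continuous_on_sum continuous_on_mult_left continuous_on_compose2[OF smooth_cont[OF smooth_pd[OF fs]]]
          continuous_intros) auto
  qed
  moreover have "f x = P (\<Sum>i\<in>UNIV. \<nu> $ i * x $ i + (0::real^'n) $ i)" for x
  proof -
    define y0 where "y0 = ((\<nu> \<bullet> x) / c) *\<^sub>R \<nu>"
    define w where "w = x - y0"
    have orth: "\<nu> \<bullet> w = 0"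
    proof (cases "c = 0")
      case True then have "\<nu> = 0" unfolding c_def by simp
      then show ?thesis by simp
    next
      case False then show ?thesis unfolding w_def y0_def c_def by (simp add: inner_diff_right)
    qed
    have "((\<lambda>s. f (y0 + s *\<^sub>R w)) has_real_derivative 0) (at s)" for s
    proof -
      let ?z = "y0 + s *\<^sub>R w"
      have "(\<Sum>k\<in>UNIV. w$k * pd k f ?z) = f ?z * ((\<chi> i. v i ?z) \<bullet> w)"
        using fpos[of ?z] by (simp add: inner_vec_def vdef sum_distrib_left field_simps)
      also have "\<dots> = 0" using nu[OF orth] by simp
      finally show ?thesis using line_deriv_pd[of f y0 s w] df by simp
    qed
    then have "f (y0 + 1 *\<^sub>R w) = f (y0 + 0 *\<^sub>R w)" by (intro DERIV_isconst_all) auto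
    then have "f x = f y0" unfolding w_def by simp
    also have "\<dots> = P (\<nu> \<bullet> x)" unfolding P_def y0_def d_def by simp
    also have "\<nu> \<bullet> x = (\<Sum>i\<in>UNIV. \<nu> $ i * x $ i + (0::real^'n) $ i)" by (simp add: inner_vec_def)
    finally show ?thesis .
  qed
  ultimately show ?thesis by blast
qed


theorem theorem1:
  fixes f h :: "real^'n::finite \<Rightarrow> real"
    and U :: "(real^'m::finite) set"
    and gF :: "real^'m \<Rightarrow> real^'m^'m"
    and \<rho> :: real
  assumes n2: "CARD('n) \<ge> 2"
    and U: "open U" "U \<noteq> {}"
    and gF: "riemannian_metric_on U gF"
    and f_smooth: "smooth_on UNIV f" and f_pos: "\<forall>x. f x > 0"
    and h_smooth: "smooth_on UNIV h"
    and soliton: "gradient_ricci_soliton_on {p. fiber_pt p \<in> U}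
                    (warped_metric f gF) (\<lambda>p. h (base_pt p)) \<rho>"
  shows "\<exists>a b :: real^'n. \<exists>P :: real \<Rightarrow> real.
           P C1_differentiable_on UNIV \<and>
           (\<forall>x. f x = P (\<Sum>i\<in>UNIV. a $ i * x $ i + b $ i))"
proof -
  have fpos: "\<And>x. f x > 0" using f_pos by blast
  have fne: "\<And>x. f x \<noteq> 0" using fpos by (metis less_irrefl)
  have df: "\<And>x. f differentiable (at x)" using f_smooth by (rule smooth_diff)
  have eq: "\<And>x i j. pd i (pd j h) x - real CARD('m) * pd j (\<lambda>x. pd i f x / f x) x
     - real CARD('m) * ((pd j f x / f x) * (pd i f x / f x)) = \<rho> * (if i = j then 1 else 0)"
    using base_equation[OF U(2) gF fne df soliton] by blast
  have m: "real CARD('m) > 0" by simp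
  note rr = rank_relation[OF f_smooth fpos h_smooth m eq]
  show ?thesis
    by (rule f_form[of f "\<lambda>i x. pd i f x / f x", OF f_smooth fpos rr(1) rr(3)]) simp
qed

end
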